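(* Let $s\geq 2$ and let $n_1>n_2>\cdots>n_s\geq 2$ be integers. Let $X_{n_1,\ldots,n_s}$ be the set of vectors of length $s+1$ consisting of: the vector $(n_1,n_2,\ldots,n_s,1)$; the set $X_s^s=\{(j,\ldots,j,0),(j,\ldots,j,1): j\in\{1,\ldots,n_s\}\}$, where $j$ is repeated in the first $s$ coordinates; and, for each $i\in\{2,\ldots,s\}$, the set $X_{i-1}^s$ of vectors $(\underbrace{n_i+k,\ldots,n_i+k}_{i-1},\underbrace{1,\ldots,1}_{s-i+1},0)$ and $(\underbrace{n_i+k,\ldots,n_i+k}_{i-1},n_i,n_{i+1},\ldots,n_s,1)$ for $k\in\{0,1,\ldots,n_{i-1}-n_i-1\}$. Let $\mathcal B_{n_1,\ldots,n_s}$ consist of all $3$-element subsets $\{\alpha_1,\alpha_2,\alpha_3\}\subseteq X_{n_1,\ldots,n_s}$ such that for every coordinate $j\in\{1,\ldots,s+1\}$ the set $\{\alpha_{1(j)},\alpha_{2(j)},\alpha_{3(j)}\}$ has exactly $2$ elements, together with the additional triple $\{(1,\ldots,1,1,0),(n_s,\ldots,n_s,1,0),(n_s,\ldots,n_s,n_s,0)\}$ (here the first vector has its first $s$ entries equal to $1$; the second has its first $s-1$ entries equal to $n_s$ and $s$-th entry $1$; the third has its first $s$ entries equal to $n_s$; all three have last entry $0$). Then the $3$-uniform bi-hypergraph $\mathcal H_{n_1,\ldots,n_s}=(X_{n_1,\ldots,n_s},\mathcal B_{n_1,\ldots,n_s})$ is a one-realization of $\{n_1,n_2,\ldots,n_s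\}$.
   Context: A bi-hypergraph $(X,\mathcal B)$ is a mixed hypergraph whose $\mathcal C$-edges and $\mathcal D$-edges both equal $\mathcal B$. A strict $k$-coloring is a partition of $X$ into exactly $k$ nonempty classes such that every edge of $\mathcal B$ contains two vertices of a common class and two vertices of distinct classes. The feasible set is the set of $k$ admitting a strict $k$-coloring; the chromatic spectrum lists, for $k=1,\ldots,\max$ of the feasible set, the number of strict $k$-colorings (as partitions). A one-realization of a set $S$ is a mixed hypergraph whose feasible set is $S$ and whose chromatic spectrum has all entries in $\{0,1\}$. $\alpha_{l(j)}$ denotes the $j$-th entry of $\alpha_l$. *)

theory Defs
  imports Main "HOL-Library.Disjoint_Sets"
begin

definition strict_coloring ::
  "'a set \<Rightarrow> 'a set set \<Rightarrow> 'a set set \<Rightarrow> nat \<Rightarrow> 'a set set \<Rightarrow> bool" where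
  "strict_coloring X CE DE k P \<longleftrightarrow>
     partition_on X P \<and> card P = k \<and>
     (\<forall>E\<in>CE. \<exists>Q\<in>P. \<exists>x\<in>E. \<exists>y\<in>E. x \<noteq> y \<and> x \<in> Q \<and> y \<in> Q) \<and>
     (\<forall>E\<in>DE. \<exists>x\<in>E. \<exists>y\<in>E. \<exists>Q\<in>P. x \<in> Q \<and> y \<notin> Q)"

definition feasible_set :: "'a set \<Rightarrow> 'a set set \<Rightarrow> 'a set set \<Rightarrow> nat set" where
  "feasible_set X CE DE = {k. \<exists>P. strict_coloring X CE DE k P}"

definition num_colorings :: "'a set \<Rightarrow> 'a set set \<Rightarrow> 'a set set \<Rightarrow> nat \<Rightarrow> nat" where
  "num_colorings X CE DE k = card {P. strict_coloring X CE DE k P}"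

definition one_realization :: "'a set \<Rightarrow> 'a set set \<Rightarrow> 'a set set \<Rightarrow> nat set \<Rightarrow> bool" where
  "one_realization X CE DE S \<longleftrightarrow>
     finite X \<and> feasible_set X CE DE = S \<and>
     (\<forall>k \<in> {1..Max (feasible_set X CE DE)}. num_colorings X CE DE k \<in> {0, 1})"

text \<open>A bi-hypergraph (X, B): C-edges = D-edges = B.\<close>
abbreviation bi_one_realization :: "'a set \<Rightarrow> 'a set set \<Rightarrow> nat set \<Rightarrow> bool" where
  "bi_one_realization X B S \<equiv> one_realization X B B S"

text \<open>Vectors of length s+1 are lists of naturals; coordinate j (1-based in the paper)
is list index j-1. The parameters n_1,...,n_s form the list ns, with n_i = ns ! (i-1).\<close>

definition Xvert :: "nat list \<Rightarrow> nat list set" where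
  "Xvert ns = (let s = length ns; n = (\<lambda>i. ns ! (i - 1)) in
     {ns @ [1]}
     \<union> {replicate s j @ [c] | j c. j \<in> {1..n s} \<and> c \<in> {0, 1}}
     \<union> (\<Union>i\<in>{2..s}. \<Union>k\<in>{0..<n (i - 1) - n i}.
          {replicate (i - 1) (n i + k) @ replicate (s - i + 1) 1 @ [0],
           replicate (i - 1) (n i + k) @ drop (i - 1) ns @ [1]}))"

definition Bedges :: "nat list \<Rightarrow> nat list set set" where
  "Bedges ns = (let s = length ns; ns_last = ns ! (s - 1) in
     {A. A \<subseteq> Xvert ns \<and> card A = 3 \<and>
         (\<forall>j < s + 1. card ((\<lambda>a. a ! j) ` A) = 2)}
     \<union> {{replicate s 1 @ [0],
         replicate (s - 1) ns_last @ [1, 0],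
         replicate s ns_last @ [0]}})"

end

theory Submission
  imports Defs
begin

section \<open>Generic partition facts\<close>

lemma part_unique: "partition_on X P \<Longrightarrow> Q1 \<in> P \<Longrightarrow> Q2 \<in> P \<Longrightarrow> u \<in> Q1 \<Longrightarrow> u \<in> Q2 \<Longrightarrow> Q1 = Q2"
  unfolding partition_on_def disjoint_def by blast

definition colf :: "'a set set \<Rightarrow> 'a \<Rightarrow> 'a set" where
  "colf P u = (THE Q. Q \<in> P \<and> u \<in> Q)"

lemma colf_eq: assumes "partition_on X P" "Q \<in> P" "u \<in> Q" shows "colf P u = Q"
  unfolding colf_def using assms part_unique[OF assms(1)] by (intro the_equality) blast+

lemma colf_in: assumes "partition_on X P" "u \<in> X" shows "colf P u \<in> P" "u \<in> colf P u"
proof -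
  obtain Q where "Q \<in> P" "u \<in> Q" using assms partition_onD1[OF assms(1)] by blast
  then show "colf P u \<in> P" "u \<in> colf P u" using colf_eq[OF assms(1)] by auto
qed

definition fibers :: "'a set \<Rightarrow> ('a \<Rightarrow> 'b) \<Rightarrow> 'a set set" where
  "fibers X f = (\<lambda>y. {x\<in>X. f x = y}) ` f ` X"

lemma part_eq_fibers:
  assumes P: "partition_on X P" and h: "\<And>u v. u \<in> X \<Longrightarrow> v \<in> X \<Longrightarrow> colf P u = colf P v \<longleftrightarrow> f u = f v"
  shows "P = fibers X f"
proof
  show "P \<subseteq> fibers X f"
  proof
    fix Q assume Q: "Q \<in> P"
    then obtain u where u: "u \<in> Q" using partition_onD3[OF P] by (metis all_not_in_conv)
    have uX: "u \<in> X" using partition_onD1[OF P] Q u by blast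
    have cu: "colf P u = Q" using colf_eq[OF P Q u] .
    have "Q = {x\<in>X. f x = f u}"
    proof (intro set_eqI iffI)
      fix x assume x: "x \<in> Q"
      have xX: "x \<in> X" using partition_onD1[OF P] Q x by blast
      have "colf P x = Q" using colf_eq[OF P Q x] .
      then show "x \<in> {x\<in>X. f x = f u}" using h[OF xX uX] cu xX by simp
    next
      fix x assume "x \<in> {x\<in>X. f x = f u}"
      then have xX: "x \<in> X" and "f x = f u" by auto
      then have "colf P x = Q" using h[OF xX uX] cu by simp
      then show "x \<in> Q" using colf_in(2)[OF P xX] by simp
    qed
    then show "Q \<in> fibers X f" unfolding fibers_def using uX by blast
  qed
next
  show "fibers X f \<subseteq> P"
  proof
    fix F assume "F \<in> fibers X f"
    then obtain u where uX: "u \<in> X" and F: "F = {x\<in>X. f x = f u}" unfolding fibers_def by blast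
    have "colf P u = F"
    proof (intro set_eqI iffI)
      fix x assume x: "x \<in> colf P u"
      have xX: "x \<in> X" using partition_onD1[OF P] colf_in[OF P uX] x by blast
      have "colf P x = colf P u" using colf_eq[OF P colf_in(1)[OF P uX] x] .
      then show "x \<in> F" using h[OF xX uX] F xX by simp
    next
      fix x assume "x \<in> F"
      then have xX: "x \<in> X" and "f x = f u" using F by auto
      then have "colf P x = colf P u" using h[OF xX uX] by simp
      then show "x \<in> colf P u" using colf_in(2)[OF P xX] by simp
    qed
    then show "F \<in> P" using colf_in(1)[OF P uX] by simp
  qed
qed

lemma fibers_partition: "partition_on X (fibers X f)"
  unfolding partition_on_def fibers_def disjoint_def by auto

lemma fibers_card: "card (fibers X f) = card (f ` X)"
  unfolding fibers_def
  by (rule card_image) (auto simp: inj_on_def)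

lemma fibers_mem: "x \<in> X \<Longrightarrow> {z\<in>X. f z = f x} \<in> fibers X f"
  unfolding fibers_def by (intro imageI) simp

lemma fibers_edge:
  assumes "E \<subseteq> X" "finite E" "card E = 3" "card (f ` E) = 2"
  shows "(\<exists>Q\<in>fibers X f. \<exists>x\<in>E. \<exists>y\<in>E. x \<noteq> y \<and> x \<in> Q \<and> y \<in> Q)"
    "(\<exists>x\<in>E. \<exists>y\<in>E. \<exists>Q\<in>fibers X f. x \<in> Q \<and> y \<notin> Q)"
proof -
  have "\<not> inj_on f E"
  proof
    assume "inj_on f E"
    then have "card (f ` E) = card E" by (rule card_image)
    with assms show False by simp
  qed
  then obtain x y where xy: "x \<in> E" "y \<in> E" "x \<noteq> y" "f x = f y" unfolding inj_on_def by blast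
  have xX: "x \<in> X" "y \<in> X" using xy assms(1) by auto
  have xy': "x \<in> {z\<in>X. f z = f x}" "y \<in> {z\<in>X. f z = f x}" using xX xy by auto
  show "(\<exists>Q\<in>fibers X f. \<exists>x\<in>E. \<exists>y\<in>E. x \<noteq> y \<and> x \<in> Q \<and> y \<in> Q)"
  proof (rule bexI[OF _ fibers_mem[OF xX(1), of f]])
    show "\<exists>x'\<in>E. \<exists>y'\<in>E. x' \<noteq> y' \<and> x' \<in> {z\<in>X. f z = f x} \<and> y' \<in> {z\<in>X. f z = f x}"
      by (rule bexI[OF _ xy(1)], rule bexI[OF _ xy(2)]) (intro conjI xy(3) xy')
  qed
  obtain a b where ab: "f ` E = {a,b}" "a \<noteq> b" using assms(4)[unfolded card_2_iff] by (elim exE conjE)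
  then have "a \<in> f ` E" "b \<in> f ` E" by auto
  then obtain x' y' where x'y': "x' \<in> E" "y' \<in> E" "f x' = a" "f y' = b" by (elim imageE) metis
  have x'X: "x' \<in> X" using x'y' assms(1) by auto
  have m: "x' \<in> {z\<in>X. f z = f x'}" "y' \<notin> {z\<in>X. f z = f x'}" using x'X x'y' ab by auto
  show "(\<exists>x\<in>E. \<exists>y\<in>E. \<exists>Q\<in>fibers X f. x \<in> Q \<and> y \<notin> Q)"
    by (rule bexI[OF _ x'y'(1)], rule bexI[OF _ x'y'(2)], rule bexI[OF _ fibers_mem[OF x'X, of f]]) (intro conjI m)
qed

definition ex1 :: "'b \<Rightarrow> 'b \<Rightarrow> 'b \<Rightarrow> bool" where
  "ex1 x y z \<longleftrightarrow> (x = y \<and> x \<noteq> z) \<or> (x = z \<and> x \<noteq> y) \<or> (y = z \<and> x \<noteq> y)"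

lemma puzzle:
  assumes "A \<noteq> B"
    "(A = B \<and> A \<noteq> C) \<or> (A = C \<and> A \<noteq> B) \<or> (B = C \<and> A \<noteq> B)"
    "(A = B \<and> A \<noteq> D) \<or> (A = D \<and> A \<noteq> B) \<or> (B = D \<and> A \<noteq> B)"
    "(C = D \<and> C \<noteq> A) \<or> (C = A \<and> C \<noteq> D) \<or> (D = A \<and> C \<noteq> D)"
    "(C = D \<and> C \<noteq> B) \<or> (C = B \<and> C \<noteq> D) \<or> (D = B \<and> C \<noteq> D)"
    "(A = E \<and> A \<noteq> C) \<or> (A = C \<and> A \<noteq> E) \<or> (E = C \<and> A \<noteq> E)"
    "(B = D \<and> B \<noteq> E) \<or> (B = E \<and> B \<noteq> D) \<or> (D = E \<and> B \<noteq> D)"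
    "(A = D \<and> A \<noteq> E) \<or> (A = E \<and> A \<noteq> D) \<or> (D = E \<and> A \<noteq> D)"
    "(C = B \<and> C \<noteq> E) \<or> (C = E \<and> C \<noteq> B) \<or> (B = E \<and> C \<noteq> B)"
  shows False
  using assms by metis

section \<open>The construction\<close>

locale L =
  fixes ns :: "nat list"
  assumes len: "length ns \<ge> 2"
    and srt: "sorted_wrt (>) ns"
    and last2: "ns ! (length ns - 1) \<ge> 2"
begin

abbreviation "s \<equiv> length ns"
abbreviation "N \<equiv> ns ! (length ns - 1)"

definition av :: "nat \<Rightarrow> nat list" where "av j = replicate s j @ [0]"
definition bv :: "nat \<Rightarrow> nat list" where "bv j = replicate s j @ [1]"
definition cv :: "nat \<Rightarrow> nat \<Rightarrow> nat list" where "cv p m = replicate p m @ replicate (s-p) 1 @ [0]"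
definition dv :: "nat \<Rightarrow> nat \<Rightarrow> nat list" where "dv p m = replicate p m @ drop p ns @ [1]"
definition Tv :: "nat list" where "Tv = ns @ [1]"

lemma ns_lt: "i < j \<Longrightarrow> j < s \<Longrightarrow> ns ! j < ns ! i"
  using srt by (simp add: sorted_wrt_iff_nth_less)

lemma ns_le: "i \<le> j \<Longrightarrow> j < s \<Longrightarrow> ns ! j \<le> ns ! i"
  using ns_lt by (cases "i = j") (auto simp: less_imp_le)

lemma ns_geN: "i < s \<Longrightarrow> N \<le> ns ! i"
  using ns_le[of i "s-1"] len by auto

lemma ns_gtN: "i < s - 1 \<Longrightarrow> N < ns ! i"
  using ns_lt[of i "s-1"] len by auto

lemma ns_inj: "i < s \<Longrightarrow> j < s \<Longrightarrow> ns ! i = ns ! j \<Longrightarrow> i = j"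
  using ns_lt by (metis less_irrefl nat_neq_iff)

lemma N2: "2 \<le> N" using last2 .

lemma av_nth: "l < s \<Longrightarrow> av j ! l = j" "av j ! s = 0" "length (av j) = s+1"
  by (auto simp: av_def nth_append)
lemma bv_nth: "l < s \<Longrightarrow> bv j ! l = j" "bv j ! s = 1" "length (bv j) = s+1"
  by (auto simp: bv_def nth_append)
lemma cv_nth: "p \<le> s \<Longrightarrow> l < s \<Longrightarrow> cv p m ! l = (if l < p then m else 1)"
  "p \<le> s \<Longrightarrow> cv p m ! s = 0" "p \<le> s \<Longrightarrow> length (cv p m) = s+1"
  by (auto simp: cv_def nth_append)
lemma dv_nth: "p \<le> s \<Longrightarrow> l < s \<Longrightarrow> dv p m ! l = (if l < p then m else ns ! l)"
  "p \<le> s \<Longrightarrow> dv p m ! s = 1" "p \<le> s \<Longrightarrow> length (dv p m) = s+1"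
  by (auto simp: dv_def nth_append)
lemma Tv_nth: "l < s \<Longrightarrow> Tv ! l = ns ! l" "Tv ! s = 1" "length Tv = s+1"
  by (auto simp: Tv_def nth_append)

lemma list_eq_nth: "length x = s+1 \<Longrightarrow> length y = s+1 \<Longrightarrow> (\<And>l. l < s+1 \<Longrightarrow> x!l = y!l) \<Longrightarrow> x = y"
  by (simp add: nth_equalityI)

lemma dv_last: "dv (s-1) N = bv N"
  using len by (intro list_eq_nth) (auto simp: dv_nth bv_nth less_Suc_eq intro!: arg_cong[of _ _ "(!) ns"])

definition valid :: "nat \<Rightarrow> nat \<Rightarrow> bool" where
  "valid p m \<longleftrightarrow> 1 \<le> p \<and> p < s \<and> ns ! p \<le> m \<and> m < ns ! (p-1)"

lemma av_X: "1 \<le> j \<Longrightarrow> j \<le> N \<Longrightarrow> av j \<in> Xvert ns"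
  unfolding Xvert_def Let_def av_def by (rule UnI1, rule UnI2, simp) blast
lemma bv_X: "1 \<le> j \<Longrightarrow> j \<le> N \<Longrightarrow> bv j \<in> Xvert ns"
  unfolding Xvert_def Let_def bv_def by (rule UnI1, rule UnI2, simp) blast
lemma Tv_X: "Tv \<in> Xvert ns"
  unfolding Xvert_def Let_def Tv_def by (rule UnI1, rule UnI1, simp)

lemma cv_X: assumes "valid p m" shows "cv p m \<in> Xvert ns"
proof -
  have h: "1 \<le> p" "p < s" "ns ! p \<le> m" "m < ns ! (p-1)" using assms by (auto simp: valid_def)
  have "cv p m \<in> {replicate (Suc p - 1) (ns ! (Suc p - 1) + k) @ replicate (s - Suc p + 1) 1 @ [0],
           replicate (Suc p - 1) (ns ! (Suc p - 1) + k) @ drop (Suc p - 1) ns @ [1]}" if "k = m - ns!p" for k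
    using h that by (simp add: cv_def Suc_diff_Suc)
  moreover have "Suc p \<in> {2..s}" "m - ns!p \<in> {0..<ns ! (Suc p - 1 - 1) - ns ! (Suc p - 1)}" using h by auto
  ultimately show ?thesis unfolding Xvert_def Let_def by blast
qed

lemma dv_X: assumes "valid p m" shows "dv p m \<in> Xvert ns"
proof -
  have h: "1 \<le> p" "p < s" "ns ! p \<le> m" "m < ns ! (p-1)" using assms by (auto simp: valid_def)
  have "dv p m \<in> {replicate (Suc p - 1) (ns ! (Suc p - 1) + k) @ replicate (s - Suc p + 1) 1 @ [0],
           replicate (Suc p - 1) (ns ! (Suc p - 1) + k) @ drop (Suc p - 1) ns @ [1]}" if "k = m - ns!p" for k
    using h that by (simp add: dv_def)
  moreover have "Suc p \<in> {2..s}" "m - ns!p \<in> {0..<ns ! (Suc p - 1 - 1) - ns ! (Suc p - 1)}" using h by auto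
  ultimately show ?thesis unfolding Xvert_def Let_def by blast
qed

lemma X_cases:
  assumes "z \<in> Xvert ns"
  obtains "z = Tv" | j where "1 \<le> j" "j \<le> N" "z = av j" | j where "1 \<le> j" "j \<le> N" "z = bv j"
    | p m where "valid p m" "z = cv p m" | p m where "valid p m" "z = dv p m"
proof -
  consider "z = Tv" | j c where "j \<in> {1..N}" "c \<in> {0,1::nat}" "z = replicate s j @ [c]"
    | i k where "i \<in> {2..s}" "k \<in> {0..<ns!(i-1-1) - ns!(i-1)}"
        "z = replicate (i - 1) (ns!(i-1) + k) @ replicate (s - i + 1) 1 @ [0] \<or>
         z = replicate (i - 1) (ns!(i-1) + k) @ drop (i - 1) ns @ [1]"
    using assms unfolding Xvert_def Let_def Tv_def by (elim UnE) auto
  then show ?thesis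
  proof cases
    case 1 then show ?thesis using that by blast
  next
    case (2 j c) then show ?thesis using that unfolding av_def bv_def by auto
  next
    case (3 i k)
    have v: "valid (i-1) (ns!(i-1) + k)" using 3 unfolding valid_def by auto
    have "s - i + 1 = s - (i - 1)" using 3 by auto
    then show ?thesis using 3 v that unfolding cv_def dv_def by metis
  qed
qed

lemma card2: "(a=b \<and> a\<noteq>c) \<or> (a=c \<and> a\<noteq>b) \<or> (b=c \<and> a\<noteq>b) \<Longrightarrow> card {a,b,c} = 2"
  by (auto simp: card_insert_if)

lemma card3: "x \<noteq> y \<Longrightarrow> x \<noteq> z \<Longrightarrow> y \<noteq> z \<Longrightarrow> card {x,y,z} = 3"
  by (auto simp: card_insert_if)

lemma edgeI:
  assumes "x \<in> Xvert ns" "y \<in> Xvert ns" "z \<in> Xvert ns" "x \<noteq> y" "x \<noteq> z" "y \<noteq> z"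
    and "\<And>l. l < s \<Longrightarrow> card {x!l, y!l, z!l} = 2" and "card {x!s, y!s, z!s} = 2"
  shows "{x,y,z} \<in> Bedges ns"
proof -
  have "\<forall>j<s+1. card ((\<lambda>a. a ! j) ` {x,y,z}) = 2"
  proof (intro allI impI)
    fix j assume "j < s+1"
    then have "j < s \<or> j = s" by arith
    then show "card ((\<lambda>a. a ! j) ` {x,y,z}) = 2" using assms(7)[of j] assms(8) by auto
  qed
  moreover have "card {x,y,z} = 3" by (rule card3) (fact assms)+
  moreover have "{x,y,z} \<subseteq> Xvert ns" using assms(1-3) by simp
  ultimately show ?thesis unfolding Bedges_def Let_def by (intro UnI1 CollectI conjI)
qed

lemma s_pos: "0 < s" using len by auto

lemma neq_nth: "x ! l \<noteq> y ! l \<Longrightarrow> x \<noteq> y" by auto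

lemma G1:
  assumes "1 \<le> j" "j \<le> N" "z \<in> Xvert ns" "z ! s \<in> {0,1}" "\<And>l. l < s \<Longrightarrow> z ! l \<noteq> j"
  shows "{av j, bv j, z} \<in> Bedges ns"
proof (rule edgeI)
  show "av j \<noteq> bv j" by (metis av_nth(2) bv_nth(2) zero_neq_one)
  show "av j \<noteq> z" using av_nth(1)[OF s_pos] assms(5)[OF s_pos] by metis
  show "bv j \<noteq> z" using bv_nth(1)[OF s_pos] assms(5)[OF s_pos] by metis
  show "card {av j ! l, bv j ! l, z ! l} = 2" if "l < s" for l
    using that assms(5)[OF that] by (intro card2) (simp add: av_nth bv_nth)
  show "card {av j ! s, bv j ! s, z ! s} = 2"
    using assms(4) by (intro card2) (auto simp: av_nth bv_nth)
qed (use assms av_X bv_X in auto)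

lemma G2:
  assumes "1 \<le> j" "j \<le> N" "1 \<le> k" "k \<le> N" "j \<noteq> k" "z \<in> Xvert ns" "z ! s \<in> {0,1}"
    "\<And>l. l < s \<Longrightarrow> z ! l \<in> {j,k}" "z \<noteq> av j" "z \<noteq> bv k"
  shows "{av j, bv k, z} \<in> Bedges ns"
proof (rule edgeI)
  show "av j \<noteq> bv k" by (metis av_nth(2) bv_nth(2) zero_neq_one)
  show "card {av j ! l, bv k ! l, z ! l} = 2" if "l < s" for l
    using that assms(5) assms(8)[OF that] by (intro card2) (auto simp add: av_nth bv_nth)
  show "card {av j ! s, bv k ! s, z ! s} = 2"
    using assms(7) by (intro card2) (auto simp: av_nth bv_nth)
qed (use assms av_X bv_X in auto)

lemma G2b:
  assumes "1 \<le> j" "j \<le> N" "1 \<le> k" "k \<le> N" "j \<noteq> k" "z \<in> Xvert ns" "z ! s = 0"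
    "\<And>l. l < s \<Longrightarrow> z ! l \<in> {j,k}"
  shows "{bv j, bv k, z} \<in> Bedges ns"
proof (rule edgeI)
  show "bv j \<noteq> bv k" using bv_nth(1)[OF s_pos] assms(5) by metis
  show "bv j \<noteq> z" by (metis bv_nth(2) assms(7) zero_neq_one)
  show "bv k \<noteq> z" by (metis bv_nth(2) assms(7) zero_neq_one)
  show "card {bv j ! l, bv k ! l, z ! l} = 2" if "l < s" for l
    using that assms(5) assms(8)[OF that] by (intro card2) (auto simp add: bv_nth)
  show "card {bv j ! s, bv k ! s, z ! s} = 2"
    using assms(7) by (intro card2) (auto simp: bv_nth)
qed (use assms bv_X in auto)

lemma valid_D: assumes "valid p m" shows "1 \<le> p" "p < s" "ns ! p \<le> m" "m < ns!(p-1)" "N \<le> m" "p \<le> s"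
  using assms ns_geN[of p] by (auto simp: valid_def)

lemma c0_valid: "valid (s-1) N"
proof -
  have "s - 1 - 1 = s - 2" by arith
  then show ?thesis using len ns_lt[of "s-2" "s-1"] by (auto simp: valid_def)
qed

lemma G3:
  assumes "valid p m" "z \<in> Xvert ns" "z ! s \<in> {0,1}" "\<And>l. l < p \<Longrightarrow> z ! l \<noteq> m"
    "\<And>l. p \<le> l \<Longrightarrow> l < s \<Longrightarrow> z ! l \<in> {1, ns ! l}"
  shows "{cv p m, dv p m, z} \<in> Bedges ns"
proof (rule edgeI)
  note v = valid_D[OF assms(1)]
  have z0: "z ! 0 \<noteq> m" using assms(4) v by auto
  show "cv p m \<noteq> dv p m" by (metis cv_nth(2)[OF v(6)] dv_nth(2)[OF v(6)] zero_neq_one)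
  show "cv p m \<noteq> z" using cv_nth(1)[OF v(6) s_pos] z0 v by auto
  show "dv p m \<noteq> z" using dv_nth(1)[OF v(6) s_pos] z0 v by auto
  show "card {cv p m ! l, dv p m ! l, z ! l} = 2" if "l < s" for l
  proof (cases "l < p")
    case True then show ?thesis using that assms(4)[OF True] v by (intro card2) (simp add: cv_nth dv_nth)
  next
    case False
    have "2 \<le> ns ! l" using ns_geN[OF that] N2 by linarith
    then show ?thesis using False that assms(5)[of l] v by (intro card2) (auto simp add: cv_nth dv_nth)
  qed
  show "card {cv p m ! s, dv p m ! s, z ! s} = 2"
    using assms(3) v by (intro card2) (auto simp: cv_nth dv_nth)
qed (use assms cv_X dv_X in auto)

lemma extra_edge: "{av 1, cv (s-1) N, av N} \<in> Bedges ns"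
proof -
  have "cv (s-1) N = replicate (s - 1) N @ [1, 0]" using len by (simp add: cv_def)
  then have e: "{av 1, cv (s-1) N, av N} = {replicate s 1 @ [0], replicate (s-1) N @ [1,0], replicate s N @ [0]}"
    by (simp add: av_def)
  show ?thesis unfolding e Bedges_def Let_def by (rule UnI2) simp
qed

end

locale CL = L +
  fixes P :: "nat list set set" and k :: nat
  assumes sc: "strict_coloring (Xvert ns) (Bedges ns) (Bedges ns) k P"
begin

lemma part: "partition_on (Xvert ns) P" using sc by (simp add: strict_coloring_def)

abbreviation col where "col \<equiv> colf P"

lemma edge:
  assumes E: "{x,y,z} \<in> Bedges ns" and X: "x \<in> Xvert ns" "y \<in> Xvert ns" "z \<in> Xvert ns"
  shows "(col x = col y \<and> col x \<noteq> col z) \<or> (col x = col z \<and> col x \<noteq> col y) \<or> (col y = col z \<and> col x \<noteq> col y)"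
proof -
  have cin: "col u \<in> P" "u \<in> col u" if "u \<in> {x,y,z}" for u using colf_in[OF part] that X by auto
  obtain Q u w where Q: "Q \<in> P" "u \<in> {x,y,z}" "w \<in> {x,y,z}" "u \<noteq> w" "u \<in> Q" "w \<in> Q"
    using sc E unfolding strict_coloring_def by blast
  then have "col u = col w" using colf_eq[OF part] by metis
  then have one: "col x = col y \<or> col x = col z \<or> col y = col z" using Q(2-4) by auto
  obtain u' w' Q' where Q': "u' \<in> {x,y,z}" "w' \<in> {x,y,z}" "Q' \<in> P" "u' \<in> Q'" "w' \<notin> Q'"
    using sc E unfolding strict_coloring_def by blast
  then have "col u' \<noteq> col w'" using colf_eq[OF part] cin by metis
  then have "\<not> (col x = col y \<and> col x = col z)" using Q'(1,2) by auto
  with one show ?thesis by auto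
qed

lemma avX: "1 \<le> j \<Longrightarrow> j \<le> N \<Longrightarrow> av j \<in> Xvert ns" by (rule av_X)

definition c0 where "c0 = cv (s-1) N"

lemma c0_nth: "l < s - 1 \<Longrightarrow> c0 ! l = N" "c0 ! (s-1) = 1" "c0 ! s = 0"
  using len by (auto simp: c0_def cv_nth)

lemma c0_X: "c0 \<in> Xvert ns" unfolding c0_def using cv_X c0_valid .

lemma S1: "col (av 1) = col (bv 1)" "col (av N) = col (bv N)" "col (av 1) \<noteq> col (av N)"
proof -
  have N1: "N \<noteq> 1" "1 \<le> N" using N2 by auto
  have Xs: "av 1 \<in> Xvert ns" "bv 1 \<in> Xvert ns" "av N \<in> Xvert ns" "bv N \<in> Xvert ns" "c0 \<in> Xvert ns"
    using av_X bv_X N1 c0_X by auto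
  have s1: "0 < s - 1" "s - 1 < s" using len by arith+
  have c0l: "c0 ! l \<in> {1, N}" if "l < s" for l
  proof (cases "l < s-1")
    case True thus ?thesis using c0_nth(1) by simp
  next
    case False then have "l = s-1" using that by arith
    thus ?thesis using c0_nth(2) by simp
  qed
  have c0a1: "c0 \<noteq> av 1" using c0_nth(1)[OF s1(1)] av_nth(1)[OF s_pos] N1 by (intro neq_nth[of _ 0]) simp
  have c0aN: "c0 \<noteq> av N" using c0_nth(2) av_nth(1)[OF s1(2)] N1 by (intro neq_nth[of _ "s-1"]) simp
  have c0bN: "c0 \<noteq> bv N" using c0_nth(3) bv_nth(2) by (intro neq_nth[of _ s]) simp
  have c0b1: "c0 \<noteq> bv 1" using c0_nth(3) bv_nth(2) by (intro neq_nth[of _ s]) simp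
  have e1: "{av 1, bv 1, av N} \<in> Bedges ns" by (rule G1) (use N1 av_X av_nth in auto)
  have e2: "{av 1, bv 1, bv N} \<in> Bedges ns" by (rule G1) (use N1 bv_X bv_nth in auto)
  have e3: "{av N, bv N, av 1} \<in> Bedges ns" by (rule G1) (use N1 av_X av_nth in auto)
  have e4: "{av N, bv N, bv 1} \<in> Bedges ns" by (rule G1) (use N1 bv_X bv_nth in auto)
  have e5: "{av 1, c0, av N} \<in> Bedges ns" unfolding c0_def by (rule extra_edge)
  have e6: "{bv 1, bv N, c0} \<in> Bedges ns" by (rule G2b) (use N1 c0_X c0_nth c0l in auto)
  have e7: "{av 1, bv N, c0} \<in> Bedges ns" by (rule G2) (use N1 c0_X c0_nth c0l c0a1 c0bN in auto)
  have e8: "{av N, bv 1, c0} \<in> Bedges ns" by (rule G2) (use N1 c0_X c0_nth c0l c0aN c0b1 in auto)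
  have r1: "col (av 1) = col (bv 1)"
  proof (rule ccontr)
    assume ne: "col (av 1) \<noteq> col (bv 1)"
    note f = edge[OF e1 Xs(1,2,3)] edge[OF e2 Xs(1,2,4)] edge[OF e3 Xs(3,4,1)] edge[OF e4 Xs(3,4,2)]
      edge[OF e5 Xs(1,5,3)] edge[OF e6 Xs(2,4,5)] edge[OF e7 Xs(1,4,5)] edge[OF e8 Xs(3,2,5)]
    show False by (rule puzzle[OF ne f])
  qed
  then show "col (av 1) = col (bv 1)" .
  show "col (av N) = col (bv N)" "col (av 1) \<noteq> col (av N)"
    using r1 edge[OF e1 Xs(1,2,3)] edge[OF e2 Xs(1,2,4)] edge[OF e3 Xs(3,4,1)] by auto
qed

lemma last01: "z \<in> Xvert ns \<Longrightarrow> z ! s \<in> {0,1}"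
  by (erule X_cases) (auto simp: av_nth bv_nth cv_nth dv_nth Tv_nth valid_def)

lemma avoid:
  assumes "1 \<le> j" "j \<le> N" "z \<in> Xvert ns" "\<And>l. l < s \<Longrightarrow> z ! l \<noteq> j"
    and ab: "col (av j) = col (bv j)"
  shows "col z \<noteq> col (av j)"
proof -
  have e: "{av j, bv j, z} \<in> Bedges ns" by (rule G1) (use assms last01 in auto)
  show ?thesis using edge[OF e av_X[OF assms(1,2)] bv_X[OF assms(1,2)] assms(3)] ab by auto
qed

lemma ab_same: assumes "1 \<le> j" "j \<le> N" shows "col (av j) = col (bv j)"
proof -
  consider "j = 1" | "j = N" | "1 < j" "j < N" using assms by linarith
  then show ?thesis
  proof cases
    case 3
    have X: "av 1 \<in> Xvert ns" "bv 1 \<in> Xvert ns" "av j \<in> Xvert ns" "bv j \<in> Xvert ns"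
      using av_X bv_X assms N2 by auto
    have e1: "{av 1, bv 1, av j} \<in> Bedges ns" by (rule G1) (use 3 N2 X av_nth in auto)
    have e2: "{av 1, bv 1, bv j} \<in> Bedges ns" by (rule G1) (use 3 N2 X bv_nth in auto)
    have e3: "{av j, bv j, av 1} \<in> Bedges ns" by (rule G1) (use 3 N2 X av_nth in auto)
    show ?thesis using edge[OF e1 X(1,2,3)] edge[OF e2 X(1,2,4)] edge[OF e3 X(3,4,1)] S1(1) by auto
  qed (use S1 in auto)
qed

lemma a_diff: assumes "1 \<le> j" "j \<le> N" "1 \<le> i" "i \<le> N" "i \<noteq> j" shows "col (av i) \<noteq> col (av j)"
  using avoid[OF assms(1,2) av_X[OF assms(3,4)] _ ab_same[OF assms(1,2)]] assms(5) av_nth by auto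

lemma d_not1: assumes v: "valid p m" shows "col (dv p m) \<noteq> col (av 1)"
proof (rule avoid)
  show "dv p m ! l \<noteq> 1" if "l < s" for l
    using N2 valid_D[OF v] ns_geN[OF that] that by (auto simp: dv_nth)
qed (use N2 dv_X[OF v] ab_same[of 1] in auto)

lemma T_notj: "1 \<le> j \<Longrightarrow> j < N \<Longrightarrow> col Tv \<noteq> col (av j)"
  apply (rule avoid)
  using Tv_X ab_same[of j] ns_geN by (auto simp: Tv_nth) (metis leD)

lemma T_not1: "col Tv \<noteq> col (av 1)" using T_notj[of 1] N2 by auto

lemma c_notj: "valid p m \<Longrightarrow> N < m \<Longrightarrow> 2 \<le> j \<Longrightarrow> j \<le> N \<Longrightarrow> col (cv p m) \<noteq> col (av j)"
  apply (rule avoid)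
  using cv_X ab_same[of j] valid_D[of p m] by (auto simp: cv_nth)

definition Sp where "Sp p m \<longleftrightarrow> col (cv p m) = col (av 1)"

lemma dich: assumes v: "valid p m"
  shows "(col (cv p m) = col (dv p m) \<and> col Tv \<noteq> col (dv p m)) \<or> (Sp p m \<and> col (dv p m) = col Tv)"
proof -
  note vd = valid_D[OF v]
  have a1: "av 1 \<in> Xvert ns" using av_X N2 by auto
  have e1: "{cv p m, dv p m, av 1} \<in> Bedges ns"
    by (rule G3[OF v]) (use a1 vd N2 in \<open>auto simp: av_nth\<close>)
  have e2: "{cv p m, dv p m, Tv} \<in> Bedges ns"
  proof (rule G3[OF v])
    show "Tv ! l \<noteq> m" if "l < p" for l
    proof -
      have "ns ! (p-1) \<le> ns ! l" by (rule ns_le) (use that vd in arith)+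
      then show ?thesis using vd that by (auto simp: Tv_nth)
    qed
  qed (use Tv_X vd in \<open>auto simp: Tv_nth\<close>)
  show ?thesis using edge[OF e1 cv_X[OF v] dv_X[OF v] a1] edge[OF e2 cv_X[OF v] dv_X[OF v] Tv_X]
      d_not1[OF v] T_not1 unfolding Sp_def by metis
qed

lemma S_imp: "valid p m \<Longrightarrow> Sp p m \<Longrightarrow> col (dv p m) = col Tv"
  using dich d_not1 unfolding Sp_def by metis

lemma F_imp: "valid p m \<Longrightarrow> \<not> Sp p m \<Longrightarrow> col (cv p m) = col (dv p m) \<and> col Tv \<noteq> col (dv p m)"
  using dich by metis

lemma down: assumes v: "valid p m" and w: "valid q m'" and qp: "q \<le> p" and S: "Sp p m"
  shows "Sp q m'"
proof (cases "q = p \<and> m' = m")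
  case True then show ?thesis using S by simp
next
  case False
  note vd = valid_D[OF v] and wd = valid_D[OF w]
  have e: "{cv p m, dv p m, dv q m'} \<in> Bedges ns"
  proof (rule G3[OF v])
    show "dv q m' ! l \<noteq> m" if "l < p" for l
    proof (cases "l < q")
      case True
      have "m' \<noteq> m"
      proof (cases "q = p")
        case True then show ?thesis using False by simp
      next
        case False
        then have "q \<le> p - 1" using qp by arith
        then have "ns ! (p-1) \<le> ns ! q" by (rule ns_le) (use vd in arith)
        then show ?thesis using vd wd by auto
      qed
      then show ?thesis using True wd that by (simp add: dv_nth)
    next
      case False
      have "ns ! (p-1) \<le> ns ! l" by (rule ns_le) (use that vd in arith)+
      then show ?thesis using False vd wd that by (simp add: dv_nth)
    qed
  qed (use dv_X[OF w] wd vd qp in \<open>auto simp: dv_nth\<close>)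
  have "col (dv p m) = col Tv" using S_imp[OF v S] .
  then show ?thesis
    using edge[OF e cv_X[OF v] dv_X[OF v] dv_X[OF w]] S F_imp[OF w] d_not1[OF w] T_not1
    unfolding Sp_def by metis
qed

lemma Fdiff: assumes v: "valid p m" and w: "valid q m'" and qp: "q \<le> p" and ne: "(q,m') \<noteq> (p,m)"
  and F: "\<not> Sp p m"
  shows "col (cv q m') \<noteq> col (cv p m)"
proof -
  note vd = valid_D[OF v] and wd = valid_D[OF w]
  have e: "{cv p m, dv p m, cv q m'} \<in> Bedges ns"
  proof (rule G3[OF v])
    show "cv q m' ! l \<noteq> m" if "l < p" for l
    proof (cases "l < q")
      case True
      have "m' \<noteq> m"
      proof (cases "q = p")
        case True then show ?thesis using ne by simp
      next
        case False
        then have "q \<le> p - 1" using qp by arith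
        then have "ns ! (p-1) \<le> ns ! q" by (rule ns_le) (use vd in arith)
        then show ?thesis using vd wd by auto
      qed
      then show ?thesis using True wd that by (simp add: cv_nth)
    next
      case False
      then show ?thesis using vd wd that N2 by (simp add: cv_nth)
    qed
  qed (use cv_X[OF w] wd vd qp in \<open>auto simp: cv_nth\<close>)
  show ?thesis using edge[OF e cv_X[OF v] dv_X[OF v] cv_X[OF w]] F_imp[OF v F] by auto
qed

lemma valid_base: "1 \<le> p \<Longrightarrow> p < s \<Longrightarrow> valid p (ns ! p)"
  unfolding valid_def using ns_lt[of "p-1" p] by auto

definition tt where "tt = Max ({0} \<union> {p. 1 \<le> p \<and> p < s \<and> Sp p (ns ! p)})"

lemma tt_props: "tt < s" "tt = 0 \<or> (1 \<le> tt \<and> tt < s \<and> Sp tt (ns ! tt))"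
proof -
  let ?A = "{0} \<union> {p. 1 \<le> p \<and> p < s \<and> Sp p (ns ! p)}"
  have fin: "finite ?A" by (rule finite_subset[of _ "{0..<s}"]) (use s_pos in auto)
  have "tt \<in> ?A" unfolding tt_def by (rule Max_in[OF fin]) simp
  then show "tt < s" "tt = 0 \<or> (1 \<le> tt \<and> tt < s \<and> Sp tt (ns ! tt))" using s_pos by auto
qed

lemma S_iff: assumes v: "valid p m" shows "Sp p m \<longleftrightarrow> p \<le> tt"
proof
  assume "Sp p m"
  then have "Sp p (ns ! p)" using down[OF v valid_base] valid_D[OF v] by auto
  then have "p \<in> {0} \<union> {p. 1 \<le> p \<and> p < s \<and> Sp p (ns ! p)}" using valid_D[OF v] by auto
  then show "p \<le> tt" unfolding tt_def
    by (rule Max_ge[rotated]) (rule finite_subset[of _ "{0..<s}"], use s_pos in auto)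
next
  assume "p \<le> tt"
  then have "tt \<noteq> 0" using valid_D[OF v] by auto
  then have "1 \<le> tt" "tt < s" "Sp tt (ns ! tt)" using tt_props by auto
  then show "Sp p m" using down[OF valid_base[of tt] v] \<open>p \<le> tt\<close> by auto
qed

lemma av_t: "av j ! tt = j" using av_nth tt_props by auto
lemma bv_t: "bv j ! tt = j" using bv_nth tt_props by auto
lemma Tv_t: "Tv ! tt = ns ! tt" using Tv_nth tt_props by auto
lemma cv_t: "valid p m \<Longrightarrow> cv p m ! tt = (if tt < p then m else 1)" using cv_nth tt_props valid_D by auto
lemma dv_t: "valid p m \<Longrightarrow> dv p m ! tt = (if tt < p then m else ns ! tt)" using dv_nth tt_props valid_D by auto

definition isrep where
  "isrep r \<longleftrightarrow> (\<exists>j. 1 \<le> j \<and> j \<le> N \<and> r = av j) \<or> (tt < s - 1 \<and> r = Tv)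
     \<or> (\<exists>p m. valid p m \<and> tt < p \<and> N < m \<and> r = cv p m)"

lemma T_aN: "tt = s - 1 \<Longrightarrow> col Tv = col (av N)"
  using S_imp[OF c0_valid] S_iff[OF c0_valid] dv_last ab_same[of N] N2 by auto

lemma c0_F: "tt < s - 1 \<Longrightarrow> col (cv (s-1) N) = col (av N) \<and> col Tv \<noteq> col (av N)"
  using F_imp[OF c0_valid] S_iff[OF c0_valid] dv_last ab_same[of N] N2 by auto

lemma repT: "\<exists>r. isrep r \<and> col Tv = col r \<and> r ! tt = Tv ! tt"
proof (cases "tt < s - 1")
  case True then show ?thesis unfolding isrep_def by blast
next
  case False
  then have "tt = s - 1" using tt_props by arith
  then have "isrep (av N)" unfolding isrep_def using N2 by (intro disjI1 exI[of _ N]) auto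
  then show ?thesis using T_aN av_t Tv_t \<open>tt = s - 1\<close> by auto
qed

lemma repC: assumes v: "valid p m" shows "\<exists>r. isrep r \<and> col (cv p m) = col r \<and> r ! tt = cv p m ! tt"
proof (cases "p \<le> tt")
  case True
  then have "Sp p m" using S_iff[OF v] by simp
  then show ?thesis using True av_t cv_t[OF v] N2 unfolding isrep_def Sp_def by (intro exI[of _ "av 1"]) auto
next
  case False
  note vd = valid_D[OF v]
  show ?thesis
  proof (cases "N < m")
    case True
    then have "isrep (cv p m)" using False v unfolding isrep_def by (intro disjI2 exI[of _ p] exI[of _ m]) auto
    then show ?thesis by blast
  next
    case mN: False
    have "\<not> p < s - 1" using ns_gtN[of p] vd mN by auto
    then have "p = s - 1" using vd by arith
    moreover have "m = N" using mN vd by auto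
    moreover have "isrep (av N)" unfolding isrep_def using N2 by (intro disjI1 exI[of _ N]) auto
    moreover have "tt < s - 1" using False \<open>p = s - 1\<close> by simp
    ultimately show ?thesis using c0_F av_t cv_t[OF v] False by (intro exI[of _ "av N"]) auto
  qed
qed

lemma rep: assumes z: "z \<in> Xvert ns" shows "\<exists>r. isrep r \<and> col z = col r \<and> r ! tt = z ! tt"
  using z
proof (cases rule: X_cases)
  case 1 then show ?thesis using repT by simp
next
  case (2 j) then show ?thesis unfolding isrep_def by blast
next
  case (3 j) then show ?thesis using ab_same av_t bv_t unfolding isrep_def by metis
next
  case (4 p m) then show ?thesis using repC by simp
next
  case (5 p m)
  show ?thesis
  proof (cases "p \<le> tt")
    case True
    then have "col (dv p m) = col Tv" "dv p m ! tt = Tv ! tt"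
      using S_imp[OF 5(1)] S_iff[OF 5(1)] dv_t[OF 5(1)] Tv_t by auto
    then show ?thesis using repT 5(2) by metis
  next
    case False
    then have "col (dv p m) = col (cv p m)" "dv p m ! tt = cv p m ! tt"
      using F_imp[OF 5(1)] S_iff[OF 5(1)] dv_t[OF 5(1)] cv_t[OF 5(1)] by auto
    then show ?thesis using repC[OF 5(1)] 5(2) by metis
  qed
qed

lemma range_disj: "valid p m \<Longrightarrow> valid q m \<Longrightarrow> p = q"
proof (rule ccontr)
  assume v: "valid p m" and w: "valid q m" and ne: "p \<noteq> q"
  have gen: False if "valid p' m" "valid q' m" "p' < q'" for p' q'
  proof -
    have "ns ! (q'-1) \<le> ns ! p'" by (rule ns_le) (use that valid_D[OF that(1)] valid_D[OF that(2)] in arith)+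
    then show False using valid_D[OF that(1)] valid_D[OF that(2)] by auto
  qed
  show False using ne gen[OF v w] gen[OF w v] by arith
qed

lemma rp_ac: "1 \<le> j \<Longrightarrow> j \<le> N \<Longrightarrow> valid p m \<Longrightarrow> tt < p \<Longrightarrow> N < m \<Longrightarrow>
    col (av j) \<noteq> col (cv p m) \<and> av j ! tt \<noteq> cv p m ! tt"
proof -
  assume h: "1 \<le> j" "j \<le> N" "valid p m" "tt < p" "N < m"
  have "col (av j) \<noteq> col (cv p m)"
  proof (cases "j = 1")
    case True then show ?thesis using S_iff[OF h(3)] h(4) unfolding Sp_def by auto
  next
    case False then have "2 \<le> j" using h by arith
    then show ?thesis using c_notj[OF h(3,5), of j] h by auto
  qed
  then show ?thesis using av_t cv_t[OF h(3)] h by auto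
qed

lemma rp_aT: "1 \<le> j \<Longrightarrow> j \<le> N \<Longrightarrow> tt < s - 1 \<Longrightarrow> col (av j) \<noteq> col Tv \<and> av j ! tt \<noteq> Tv ! tt"
proof -
  assume h: "1 \<le> j" "j \<le> N" "tt < s - 1"
  have "col (av j) \<noteq> col Tv"
  proof (cases "j = N")
    case True then show ?thesis using c0_F[OF h(3)] by auto
  next
    case False then show ?thesis using T_notj[of j] h by auto
  qed
  then show ?thesis using av_t Tv_t ns_gtN[OF h(3)] h by auto
qed

lemma rp_Tc: "valid p m \<Longrightarrow> tt < p \<Longrightarrow> col Tv \<noteq> col (cv p m) \<and> Tv ! tt \<noteq> cv p m ! tt"
proof -
  assume h: "valid p m" "tt < p"
  have "col Tv \<noteq> col (cv p m)" using F_imp[OF h(1)] S_iff[OF h(1)] h by auto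
  moreover have "ns ! (p-1) \<le> ns ! tt" by (rule ns_le) (use h valid_D[OF h(1)] in arith)+
  ultimately show ?thesis using Tv_t cv_t[OF h(1)] h valid_D[OF h(1)] by auto
qed

lemma rp_cc: "valid p m \<Longrightarrow> tt < p \<Longrightarrow> valid q m' \<Longrightarrow> tt < q \<Longrightarrow>
   col (cv p m) = col (cv q m') \<longleftrightarrow> cv p m ! tt = cv q m' ! tt"
proof -
  assume h: "valid p m" "tt < p" "valid q m'" "tt < q"
  show ?thesis
  proof (cases "(q, m') = (p, m)")
    case True then show ?thesis by auto
  next
    case False
    have "m \<noteq> m'" using range_disj[OF h(1)] h(3) False by auto
    moreover have "col (cv p m) \<noteq> col (cv q m')"
    proof (cases "q \<le> p")
      case True then show ?thesis using Fdiff[OF h(1,3) True False] S_iff[OF h(1)] h by auto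
    next
      case qp: False
      have ne2: "(p, m) \<noteq> (q, m')" using False by auto
      have "q \<ge> p" using qp by arith
      then show ?thesis using Fdiff[OF h(3,1) _ ne2] S_iff[OF h(3)] h by auto
    qed
    ultimately show ?thesis using cv_t h by auto
  qed
qed

lemma rep_pair: assumes "isrep r" "isrep r'" shows "col r = col r' \<longleftrightarrow> r ! tt = r' ! tt"
  using assms unfolding isrep_def
  apply (elim disjE exE conjE)
  using a_diff av_t rp_aT rp_ac rp_Tc rp_cc by (metis)+

lemma main_eq: "u \<in> Xvert ns \<Longrightarrow> v \<in> Xvert ns \<Longrightarrow> col u = col v \<longleftrightarrow> u ! tt = v ! tt"
  using rep[of u] rep[of v] rep_pair by metis

lemma main: "P = fibers (Xvert ns) (\<lambda>x. x ! tt)"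
  by (rule part_eq_fibers[OF part main_eq])

end


context L
begin

lemma coord_image: assumes t: "t < s" shows "(\<lambda>x. x ! t) ` Xvert ns = {1..ns ! t}"
proof
  have Nt: "N \<le> ns ! t" using ns_geN[OF t] .
  show "(\<lambda>x. x ! t) ` Xvert ns \<subseteq> {1..ns ! t}"
  proof
    fix y assume "y \<in> (\<lambda>x. x ! t) ` Xvert ns"
    then obtain z where z: "z \<in> Xvert ns" "y = z ! t" by blast
    from z(1) show "y \<in> {1..ns ! t}"
    proof (cases rule: X_cases)
      case 1 then show ?thesis using z t Nt N2 by (auto simp: Tv_nth)
    next
      case (2 j) then show ?thesis using z t Nt by (auto simp: av_nth)
    next
      case (3 j) then show ?thesis using z t Nt by (auto simp: bv_nth)
    next
      case (4 p m)
      note vd = valid_D[OF 4(1)]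
      show ?thesis
      proof (cases "t < p")
        case True
        have "ns ! (p-1) \<le> ns ! t" by (rule ns_le) (use True vd in arith)+
        then show ?thesis using True 4 z t vd N2 by (auto simp: cv_nth)
      qed (use 4 z t vd N2 Nt in \<open>auto simp: cv_nth\<close>)
    next
      case (5 p m)
      note vd = valid_D[OF 5(1)]
      show ?thesis
      proof (cases "t < p")
        case True
        have "ns ! (p-1) \<le> ns ! t" by (rule ns_le) (use True vd in arith)+
        then show ?thesis using True 5 z t vd N2 by (auto simp: dv_nth)
      qed (use 5 z t vd N2 Nt in \<open>auto simp: dv_nth\<close>)
    qed
  qed
  show "{1..ns ! t} \<subseteq> (\<lambda>x. x ! t) ` Xvert ns"
  proof
    fix v assume v: "v \<in> {1..ns ! t}"
    consider "v \<le> N" | "v = ns ! t" | "N < v" "v < ns ! t" using v by force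
    then show "v \<in> (\<lambda>x. x ! t) ` Xvert ns"
    proof cases
      case 1 then show ?thesis using av_X[of v] av_nth(1)[OF t] v by (metis atLeastAtMost_iff image_eqI)
    next
      case 2 then show ?thesis using Tv_X Tv_nth(1)[OF t] by (metis image_eqI)
    next
      case 3
      define p where "p = (LEAST p. ns ! p \<le> v)"
      have s1: "s - 1 < s" using s_pos by arith
      have pv: "ns ! p \<le> v" unfolding p_def by (rule LeastI[of _ "s-1"]) (use 3 in simp)
      have ps: "p \<le> s - 1" unfolding p_def by (rule Least_le) (use 3 in simp)
      have tp: "t < p"
      proof (rule ccontr)
        assume "\<not> t < p"
        then have "ns ! t \<le> ns ! p" using ns_le[of p t] t by simp
        then show False using pv 3 by simp
      qed
      have "\<not> ns ! (p - 1) \<le> v" unfolding p_def by (rule not_less_Least) (use tp p_def in simp)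
      then have val: "valid p v" using pv ps tp s1 unfolding valid_def by auto
      have "cv p v ! t = v" using cv_nth(1)[OF _ t] tp valid_D[OF val] by auto
      then show ?thesis using cv_X[OF val] by (metis image_eqI)
    qed
  qed
qed

lemma Xfin: "finite (Xvert ns)"
proof -
  have "{replicate s j @ [c] | j c. j \<in> {1..N} \<and> c \<in> {0, 1::nat}} = (\<lambda>(j,c). replicate s j @ [c]) ` ({1..N} \<times> {0,1})"
    by auto
  then show ?thesis unfolding Xvert_def Let_def
    by (intro finite_UnI finite_UN_I finite.emptyI finite.insertI finite_imageI finite_cartesian_product finite_atLeastAtMost finite_atLeastLessThan) simp_all
qed

lemma fib_coloring: assumes t: "t < s"
  shows "strict_coloring (Xvert ns) (Bedges ns) (Bedges ns) (ns ! t) (fibers (Xvert ns) (\<lambda>x. x ! t))"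
proof -
  have E: "E \<subseteq> Xvert ns \<and> finite E \<and> card E = 3 \<and> card ((\<lambda>x. x ! t) ` E) = 2" if "E \<in> Bedges ns" for E
  proof -
    from that consider "E \<subseteq> Xvert ns" "card E = 3" "\<forall>j < s + 1. card ((\<lambda>a. a ! j) ` E) = 2"
      | "E = {replicate s 1 @ [0], replicate (s - 1) N @ [1, 0], replicate s N @ [0]}"
      unfolding Bedges_def Let_def by blast
    then show ?thesis
    proof cases
      case 1 then show ?thesis using t card.infinite[of E] by (metis less_Suc_eq Suc_eq_plus1 zero_neq_numeral)
    next
      case 2
      have s1: "0 < s - 1" "s - 1 < s" using len by arith+
      have c: "cv (s-1) N = replicate (s - 1) N @ [1, 0]" using len by (simp add: cv_def)
      have Ee: "E = {av 1, cv (s-1) N, av N}" using 2 c by (simp add: av_def)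
      have XX: "E \<subseteq> Xvert ns" using Ee av_X cv_X c0_valid N2 by auto
      have d1: "av 1 \<noteq> cv (s-1) N" using cv_nth(1)[of "s-1" 0 N] s1 av_nth(1)[OF s_pos] N2 by (intro neq_nth[of _ 0]) force
      have d2: "cv (s-1) N \<noteq> av N" using cv_nth(1)[of "s-1" "s-1" N] s1 av_nth(1)[OF s1(2)] N2 by (intro neq_nth[of _ "s-1"]) simp
      have d3: "av 1 \<noteq> av N" using av_nth(1)[OF s_pos] N2 by (intro neq_nth[of _ 0]) simp
      have "card E = 3" using Ee d1 d2 d3 card3 by simp
      moreover have "card ((\<lambda>x. x ! t) ` E) = 2"
        using Ee t N2 by (simp add: av_nth cv_nth)
      ultimately show ?thesis using XX Ee by simp
    qed
  qed
  show ?thesis unfolding strict_coloring_def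
  proof (intro conjI ballI)
    show "partition_on (Xvert ns) (fibers (Xvert ns) (\<lambda>x. x ! t))" by (rule fibers_partition)
    show "card (fibers (Xvert ns) (\<lambda>x. x ! t)) = ns ! t" unfolding fibers_card coord_image[OF t] by simp
  next
    fix E assume "E \<in> Bedges ns"
    then show "\<exists>Q\<in>fibers (Xvert ns) (\<lambda>x. x ! t). \<exists>x\<in>E. \<exists>y\<in>E. x \<noteq> y \<and> x \<in> Q \<and> y \<in> Q"
      using fibers_edge(1) E by blast
  next
    fix E assume "E \<in> Bedges ns"
    then show "\<exists>x\<in>E. \<exists>y\<in>E. \<exists>Q\<in>fibers (Xvert ns) (\<lambda>x. x ! t). x \<in> Q \<and> y \<notin> Q"
      using fibers_edge(2) E by blast
  qed
qed

lemma coloring_form: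
  assumes "strict_coloring (Xvert ns) (Bedges ns) (Bedges ns) k P"
  shows "\<exists>t<s. P = fibers (Xvert ns) (\<lambda>x. x ! t) \<and> k = ns ! t"
proof -
  have C: "CL ns P k" by (intro CL.intro L_axioms CL_axioms.intro assms)
  have "\<exists>t. t < s \<and> P = fibers (Xvert ns) (\<lambda>x. x ! t)"
    using CL.main[OF C] CL.tt_props(1)[OF C] by blast
  then obtain t where t: "t < s" "P = fibers (Xvert ns) (\<lambda>x. x ! t)" by blast
  have "k = card P" using assms by (simp add: strict_coloring_def)
  also have "\<dots> = card ((\<lambda>x. x ! t) ` Xvert ns)" unfolding t(2) by (rule fibers_card)
  also have "\<dots> = ns ! t" using coord_image[OF t(1)] by simp
  finally show ?thesis using t by blast
qed

lemma result: "one_realization (Xvert ns) (Bedges ns) (Bedges ns) (set ns)"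
proof -
  have fs: "feasible_set (Xvert ns) (Bedges ns) (Bedges ns) = set ns"
  proof
    show "feasible_set (Xvert ns) (Bedges ns) (Bedges ns) \<subseteq> set ns"
    proof
      fix k assume "k \<in> feasible_set (Xvert ns) (Bedges ns) (Bedges ns)"
      then obtain P where Pc: "strict_coloring (Xvert ns) (Bedges ns) (Bedges ns) k P"
        unfolding feasible_set_def by blast
      obtain t where "t < s" "k = ns ! t" using coloring_form[OF Pc] by blast
      then show "k \<in> set ns" by simp
    qed
    show "set ns \<subseteq> feasible_set (Xvert ns) (Bedges ns) (Bedges ns)"
      unfolding feasible_set_def using fib_coloring by (auto simp: in_set_conv_nth) blast
  qed
  have nc: "num_colorings (Xvert ns) (Bedges ns) (Bedges ns) k \<in> {0,1}" for k
  proof -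
    let ?S = "{P. strict_coloring (Xvert ns) (Bedges ns) (Bedges ns) k P}"
    have uniq: "P1 = P2" if h1: "P1 \<in> ?S" and h2: "P2 \<in> ?S" for P1 P2
    proof -
      obtain t1 where 1: "t1 < s" "P1 = fibers (Xvert ns) (\<lambda>x. x ! t1)" "k = ns ! t1"
        using coloring_form[OF h1[simplified]] by blast
      obtain t2 where 2: "t2 < s" "P2 = fibers (Xvert ns) (\<lambda>x. x ! t2)" "k = ns ! t2"
        using coloring_form[OF h2[simplified]] by blast
      have "t1 = t2" using ns_inj[OF 1(1) 2(1)] 1(3) 2(3) by simp
      then show ?thesis using 1 2 by simp
    qed
    show ?thesis
    proof (cases "?S = {}")
      case True then show ?thesis unfolding num_colorings_def by (simp only: card.empty) simp
    next
      case False
      then obtain P0 where P0: "P0 \<in> ?S" by blast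
      have "?S = {P0}"
      proof (intro set_eqI iffI)
        fix x assume "x \<in> ?S" then show "x \<in> {P0}" using uniq[OF _ P0] by simp
      qed (use P0 in simp)
      then show ?thesis unfolding num_colorings_def by simp
    qed
  qed
  show ?thesis unfolding one_realization_def by (intro conjI ballI Xfin fs nc)
qed

end

theorem theorem2p4:
  fixes ns :: "nat list"
  assumes "length ns \<ge> 2"
    and "sorted_wrt (>) ns"
    and "ns ! (length ns - 1) \<ge> 2"
  shows "bi_one_realization (Xvert ns) (Bedges ns) (set ns)"
proof -
  interpret L ns by unfold_locales (use assms in auto)
  show ?thesis by (rule result)
qed

end
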